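(* For every instance $(A,C,k)$, there exists a committee satisfying EJR+ whose representation ratio is at least $\frac34-\frac{2}{\sqrt{k}}$ and whose utilitarian ratio is at least $\frac{2}{\sqrt{k}}-\frac1k$.
   Context: An instance $(A,C,k)$ consists of a finite nonempty candidate set $C$, voters $N=\{1,\dots,n\}$, approval sets $A_i\subseteq C$, and a committee size $1\le k\le|C|$. A committee is $W\subseteq C$ with $|W|\le k$. $\mathrm{sw}(W)=\sum_i|A_i\cap W|$ and $\mathrm{cov}(W)=|\{i:A_i\cap W\ne\emptyset\}|$; the utilitarian ratio is $\mathrm{sw}(W)/\max\{\mathrm{sw}(W'):|W'|=k\}$ and the representation ratio is $\mathrm{cov}(W)/\max\{\mathrm{cov}(W'):|W'|=k\}$. $W$ satisfies EJR+ if for every $\ell\in\{1,\dots,k\}$ and every $N'\subseteq N$ with $|N'|\ge\ell n/k$ and $\bigcap_{i\in N'}A_i\ne\emptyset$, either some $i\in N'$ has $|A_i\cap W|\ge\ell$ or $\bigcap_{i\in N'}A_i\subseteq W$. *)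

theory Defs
  imports Complex_Main
begin

definition is_instance :: "'c set \<Rightarrow> nat \<Rightarrow> (nat \<Rightarrow> 'c set) \<Rightarrow> nat \<Rightarrow> bool" where
  "is_instance C n A k \<longleftrightarrow> 1 \<le> n \<and> finite C \<and> C \<noteq> {} \<and> (\<forall>i\<in>{1..n}. A i \<subseteq> C)
     \<and> 1 \<le> k \<and> k \<le> card C"

definition committee :: "'c set \<Rightarrow> nat \<Rightarrow> 'c set \<Rightarrow> bool" where
  "committee C k W \<longleftrightarrow> W \<subseteq> C \<and> card W \<le> k"

definition sw :: "nat \<Rightarrow> (nat \<Rightarrow> 'c set) \<Rightarrow> 'c set \<Rightarrow> nat" where
  "sw n A W = (\<Sum>i\<in>{1..n}. card (A i \<inter> W))"

definition cov :: "nat \<Rightarrow> (nat \<Rightarrow> 'c set) \<Rightarrow> 'c set \<Rightarrow> nat" where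
  "cov n A W = card {i\<in>{1..n}. A i \<inter> W \<noteq> {}}"

definition opt_sw :: "'c set \<Rightarrow> nat \<Rightarrow> (nat \<Rightarrow> 'c set) \<Rightarrow> nat \<Rightarrow> nat" where
  "opt_sw C n A k = Max {sw n A W' | W'. W' \<subseteq> C \<and> card W' = k}"

definition opt_cov :: "'c set \<Rightarrow> nat \<Rightarrow> (nat \<Rightarrow> 'c set) \<Rightarrow> nat \<Rightarrow> nat" where
  "opt_cov C n A k = Max {cov n A W' | W'. W' \<subseteq> C \<and> card W' = k}"

text \<open>Ratios; convention: if the optimum is 0, the ratio is 1 (every committee is optimal).\<close>
definition util_ratio :: "'c set \<Rightarrow> nat \<Rightarrow> (nat \<Rightarrow> 'c set) \<Rightarrow> nat \<Rightarrow> 'c set \<Rightarrow> real" where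
  "util_ratio C n A k W = (if opt_sw C n A k = 0 then 1 else real (sw n A W) / real (opt_sw C n A k))"

definition rep_ratio :: "'c set \<Rightarrow> nat \<Rightarrow> (nat \<Rightarrow> 'c set) \<Rightarrow> nat \<Rightarrow> 'c set \<Rightarrow> real" where
  "rep_ratio C n A k W = (if opt_cov C n A k = 0 then 1 else real (cov n A W) / real (opt_cov C n A k))"

definition EJR_plus :: "nat \<Rightarrow> (nat \<Rightarrow> 'c set) \<Rightarrow> nat \<Rightarrow> 'c set \<Rightarrow> bool" where
  "EJR_plus n A k W \<longleftrightarrow>
     (\<forall>l\<in>{1..k}. \<forall>N'. N' \<subseteq> {1..n} \<and> N' \<noteq> {} \<and> real (card N') \<ge> real l * real n / real k
        \<and> (\<Inter>i\<in>N'. A i) \<noteq> {} \<longrightarrow>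
        (\<exists>i\<in>N'. card (A i \<inter> W) \<ge> l) \<or> (\<Inter>i\<in>N'. A i) \<subseteq> W)"

end

theory Submission
  imports Defs
begin

definition grp :: "nat \<Rightarrow> (nat \<Rightarrow> 'c set) \<Rightarrow> 'c set \<Rightarrow> nat \<Rightarrow> 'c \<Rightarrow> nat set" where
  "grp n A W l c = {i\<in>{1..n}. c \<in> A i \<and> card (A i \<inter> W) < l}"

definition elig :: "'c set \<Rightarrow> nat \<Rightarrow> (nat \<Rightarrow> 'c set) \<Rightarrow> nat \<Rightarrow> 'c set \<Rightarrow> nat \<Rightarrow> 'c \<Rightarrow> bool" where
  "elig C n A k W l c \<longleftrightarrow> c \<in> C \<and> c \<notin> W \<and> real (card (grp n A W l c)) \<ge> real l * real n / real k"

definition scr :: "nat \<Rightarrow> (nat \<Rightarrow> 'c set) \<Rightarrow> 'c \<Rightarrow> nat" where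
  "scr n A c = card {i\<in>{1..n}. c \<in> A i}"

definition valid :: "'c set \<Rightarrow> nat \<Rightarrow> (nat \<Rightarrow> 'c set) \<Rightarrow> nat \<Rightarrow> (nat \<Rightarrow> 'c) \<Rightarrow> (nat \<Rightarrow> nat) \<Rightarrow> nat \<Rightarrow> bool" where
  "valid C n A k cs ls L \<longleftrightarrow>
    (\<forall>j<L. 1 \<le> ls j \<and> ls j \<le> k \<and> elig C n A k (cs ` {..<j}) (ls j) (cs j) \<and>
       (\<forall>c. elig C n A k (cs ` {..<j}) (ls j) c \<longrightarrow> scr n A c \<le> scr n A (cs j))) \<and>
    (\<forall>j j'. j \<le> j' \<longrightarrow> j' < L \<longrightarrow> ls j' \<le> ls j)"

definition complete :: "'c set \<Rightarrow> nat \<Rightarrow> (nat \<Rightarrow> 'c set) \<Rightarrow> nat \<Rightarrow> (nat \<Rightarrow> 'c) \<Rightarrow> (nat \<Rightarrow> nat) \<Rightarrow> nat \<Rightarrow> bool" where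
  "complete C n A k cs ls L \<longleftrightarrow>
    (\<forall>j\<le>L. \<forall>l. 1 \<le> l \<longrightarrow> l \<le> k \<longrightarrow> (\<forall>j'. j \<le> j' \<longrightarrow> j' < L \<longrightarrow> ls j' < l) \<longrightarrow>
       (\<forall>c. \<not> elig C n A k (cs ` {..<j}) l c))"

definition gj :: "nat \<Rightarrow> (nat \<Rightarrow> 'c set) \<Rightarrow> (nat \<Rightarrow> 'c) \<Rightarrow> (nat \<Rightarrow> nat) \<Rightarrow> nat \<Rightarrow> nat set" where
  "gj n A cs ls j = grp n A (cs ` {..<j}) (ls j) (cs j)"

definition Jv :: "nat \<Rightarrow> (nat \<Rightarrow> 'c set) \<Rightarrow> (nat \<Rightarrow> 'c) \<Rightarrow> (nat \<Rightarrow> nat) \<Rightarrow> nat \<Rightarrow> nat \<Rightarrow> nat set" where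
  "Jv n A cs ls L i = {j. j < L \<and> i \<in> gj n A cs ls j}"

definition pay :: "nat \<Rightarrow> (nat \<Rightarrow> 'c set) \<Rightarrow> (nat \<Rightarrow> 'c) \<Rightarrow> (nat \<Rightarrow> nat) \<Rightarrow> nat \<Rightarrow> nat \<Rightarrow> real" where
  "pay n A cs ls L i = (\<Sum>j\<in>Jv n A cs ls L i. 1 / real (card (gj n A cs ls j)))"

locale inst =
  fixes C :: "'c set" and n :: nat and A :: "nat \<Rightarrow> 'c set" and k :: nat
  assumes isi: "is_instance C n A k"
begin

lemma n_pos: "1 \<le> n" and finC: "finite C" and CneE: "C \<noteq> {}" and AsubC: "i \<in> {1..n} \<Longrightarrow> A i \<subseteq> C"
  and k_pos: "1 \<le> k" and k_le: "k \<le> card C"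
  using isi unfolding is_instance_def by auto

lemma finA: "i \<in> {1..n} \<Longrightarrow> finite (A i)"
  by (rule finite_subset[OF AsubC finC])

lemma grp_sub: "grp n A W l c \<subseteq> {1..n}"
  unfolding grp_def by auto

lemma grp_fin: "finite (grp n A W l c)"
  by (rule finite_subset[OF grp_sub]) simp

lemma grp_scr: "card (grp n A W l c) \<le> scr n A c"
  unfolding grp_def scr_def by (rule card_mono) auto

lemma scr_le_n: "scr n A c \<le> n"
proof -
  have "{i\<in>{1..n}. c \<in> A i} \<subseteq> {1..n}" by auto
  hence "card {i\<in>{1..n}. c \<in> A i} \<le> card {1..n}" by (intro card_mono) auto
  thus ?thesis unfolding scr_def by simp
qed

lemma grp_mono: "W \<subseteq> W' \<Longrightarrow> grp n A W' l c \<subseteq> grp n A W l c"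
proof
  fix i assume WW: "W \<subseteq> W'" and i: "i \<in> grp n A W' l c"
  hence i1: "i \<in> {1..n}" and ci: "c \<in> A i" and lt: "card (A i \<inter> W') < l" unfolding grp_def by auto
  have "card (A i \<inter> W) \<le> card (A i \<inter> W')"
    by (rule card_mono) (use finA[OF i1] WW in auto)
  thus "i \<in> grp n A W l c" using i1 ci lt unfolding grp_def by auto
qed

lemma elig_mono: "W \<subseteq> W' \<Longrightarrow> elig C n A k W' l c \<Longrightarrow> elig C n A k W l c"
proof -
  assume WW: "W \<subseteq> W'" and e: "elig C n A k W' l c"
  have "card (grp n A W' l c) \<le> card (grp n A W l c)"
    by (rule card_mono[OF grp_fin grp_mono[OF WW]])
  thus ?thesis using e WW unfolding elig_def by auto
qed

lemma elig_grp_pos: assumes "elig C n A k W l c" "1 \<le> l"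
  shows "card (grp n A W l c) > 0"
proof -
  have "real l * real n / real k > 0" using assms(2) n_pos k_pos by auto
  thus ?thesis using assms(1) unfolding elig_def by auto
qed

context
  fixes cs :: "nat \<Rightarrow> 'c" and ls :: "nat \<Rightarrow> nat" and L :: nat
  assumes V: "valid C n A k cs ls L"
begin

lemma V_lev: "j < L \<Longrightarrow> 1 \<le> ls j \<and> ls j \<le> k"
  using V unfolding valid_def by auto

lemma V_elig: "j < L \<Longrightarrow> elig C n A k (cs ` {..<j}) (ls j) (cs j)"
  using V unfolding valid_def by auto

lemma V_max: "j < L \<Longrightarrow> elig C n A k (cs ` {..<j}) (ls j) c \<Longrightarrow> scr n A c \<le> scr n A (cs j)"
  using V unfolding valid_def by auto

lemma V_sorted: "j \<le> j' \<Longrightarrow> j' < L \<Longrightarrow> ls j' \<le> ls j"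
  using V unfolding valid_def by auto

lemma V_inC: "j < L \<Longrightarrow> cs j \<in> C"
  using V_elig unfolding elig_def by auto

lemma V_dist: "j' < j \<Longrightarrow> j < L \<Longrightarrow> cs j' \<noteq> cs j"
proof
  assume a: "j' < j" "j < L" "cs j' = cs j"
  have "cs j \<notin> cs ` {..<j}" using V_elig[OF a(2)] unfolding elig_def by auto
  moreover have "cs j' \<in> cs ` {..<j}" using a(1) by auto
  ultimately show False using a(3) by simp
qed

lemma V_inj: "inj_on cs {..<L}"
proof (rule inj_onI)
  fix x y assume "x \<in> {..<L}" "y \<in> {..<L}" "cs x = cs y"
  thus "x = y" using V_dist[of x y] V_dist[of y x] by (cases x y rule: linorder_cases) auto
qed

lemma V_card: "card (cs ` {..<L}) = L"
  using V_inj by (simp add: card_image)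

lemma V_WG_sub: "cs ` {..<L} \<subseteq> C"
  using V_inC by auto


lemma gj_size: "j < L \<Longrightarrow> real (card (gj n A cs ls j)) \<ge> real (ls j) * real n / real k"
  using V_elig unfolding gj_def elig_def by auto

lemma gj_pos: "j < L \<Longrightarrow> card (gj n A cs ls j) > 0"
  using elig_grp_pos V_elig V_lev unfolding gj_def by blast


lemma Jv_fin: "finite (Jv n A cs ls L i)" unfolding Jv_def by auto

lemma charge_lev:
  assumes i: "i \<in> {1..n}" and jJ: "j \<in> Jv n A cs ls L i"
  shows "card (Jv n A cs ls L i) \<le> ls j"
proof -
  define jL where "jL = Max (Jv n A cs ls L i)"
  have ne: "Jv n A cs ls L i \<noteq> {}" using jJ by auto
  have jL_in: "jL \<in> Jv n A cs ls L i" unfolding jL_def using Max_in[OF Jv_fin ne] .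
  have jL_lt: "jL < L" using jL_in unfolding Jv_def by auto
  have j_le: "j \<le> jL" unfolding jL_def using Max_ge[OF Jv_fin jJ] .
  have igrp: "i \<in> gj n A cs ls jL" using jL_in unfolding Jv_def by auto
  hence lt: "card (A i \<inter> cs ` {..<jL}) < ls jL" unfolding gj_def grp_def by auto
  have sub: "cs ` (Jv n A cs ls L i - {jL}) \<subseteq> A i \<inter> cs ` {..<jL}"
  proof
    fix x assume "x \<in> cs ` (Jv n A cs ls L i - {jL})"
    then obtain j' where j': "j' \<in> Jv n A cs ls L i" "j' \<noteq> jL" "x = cs j'" by auto
    have "j' \<le> jL" unfolding jL_def using Max_ge[OF Jv_fin j'(1)] .
    hence "j' < jL" using j'(2) by auto
    moreover have "cs j' \<in> A i" using j'(1) unfolding Jv_def gj_def grp_def by auto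
    ultimately show "x \<in> A i \<inter> cs ` {..<jL}" using j'(3) by auto
  qed
  have inj: "inj_on cs (Jv n A cs ls L i - {jL})"
    using V_inj by (rule inj_on_subset) (auto simp: Jv_def)
  have "card (Jv n A cs ls L i - {jL}) = card (cs ` (Jv n A cs ls L i - {jL}))" using inj by (simp add: card_image)
  also have "\<dots> \<le> card (A i \<inter> cs ` {..<jL})"
    by (rule card_mono) (use finA[OF i] sub in auto)
  finally have "card (Jv n A cs ls L i) - 1 < ls jL" using lt jL_in Jv_fin by (simp add: card_Diff_singleton)
  hence "card (Jv n A cs ls L i) \<le> ls jL" by linarith
  also have "ls jL \<le> ls j" using V_sorted[OF j_le jL_lt] .
  finally show ?thesis .
qed


lemma pay_le: assumes i: "i \<in> {1..n}" shows "pay n A cs ls L i \<le> real k / real n"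
proof (cases "Jv n A cs ls L i = {}")
  case True thus ?thesis unfolding pay_def by simp
next
  case False
  define m where "m = card (Jv n A cs ls L i)"
  have mpos: "m > 0" using False Jv_fin unfolding m_def by auto
  have each: "1 / real (card (gj n A cs ls j)) \<le> real k / (real m * real n)" if jJ: "j \<in> Jv n A cs ls L i" for j
  proof -
    have jL: "j < L" using jJ unfolding Jv_def by auto
    have "real m \<le> real (ls j)" using charge_lev[OF i jJ] unfolding m_def by simp
    hence "real m * real n / real k \<le> real (ls j) * real n / real k"
      by (intro divide_right_mono mult_right_mono) auto
    also have "\<dots> \<le> real (card (gj n A cs ls j))" using gj_size[OF jL] .
    finally have le: "real m * real n / real k \<le> real (card (gj n A cs ls j))" .
    have pos: "real m * real n / real k > 0" using mpos n_pos k_pos by auto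
    have "1 / real (card (gj n A cs ls j)) \<le> 1 / (real m * real n / real k)"
    proof (rule divide_left_mono[OF le])
      have cpos: "real (card (gj n A cs ls j)) > 0" using pos le by linarith
      show "0 < real (card (gj n A cs ls j)) * (real m * real n / real k)" using mult_pos_pos[OF cpos pos] by (simp add: times_divide_eq_right)
    qed simp
    thus ?thesis by simp
  qed
  have "pay n A cs ls L i \<le> (\<Sum>j\<in>Jv n A cs ls L i. real k / (real m * real n))"
    unfolding pay_def by (rule sum_mono) (rule each)
  also have "\<dots> = real m * (real k / (real m * real n))" by (simp add: m_def)
  also have "\<dots> = real k / real n" using mpos by simp
  finally show ?thesis .
qed

lemma pay_sum: "(\<Sum>i\<in>{1..n}. pay n A cs ls L i) = real L"
proof -
  have Jeq: "Jv n A cs ls L i = {j\<in>{..<L}. i \<in> gj n A cs ls j}" for i unfolding Jv_def by auto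
  have "(\<Sum>i\<in>{1..n}. pay n A cs ls L i) = (\<Sum>i\<in>{1..n}. \<Sum>j\<in>{..<L}. if i \<in> gj n A cs ls j then 1 / real (card (gj n A cs ls j)) else 0)"
    unfolding pay_def Jeq by (rule sum.cong[OF refl], rule sum.inter_filter) simp
  also have "\<dots> = (\<Sum>j\<in>{..<L}. \<Sum>i\<in>{1..n}. if i \<in> gj n A cs ls j then 1 / real (card (gj n A cs ls j)) else 0)"
    by (rule sum.swap)
  also have "\<dots> = (\<Sum>j\<in>{..<L}. 1)"
  proof (rule sum.cong[OF refl])
    fix j assume "j \<in> {..<L}"
    hence jL: "j < L" by auto
    have sub: "gj n A cs ls j \<subseteq> {1..n}" unfolding gj_def using grp_sub by blast
    have eq: "{i\<in>{1..n}. i \<in> gj n A cs ls j} = gj n A cs ls j" using sub by auto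
    have "(\<Sum>i\<in>{1..n}. if i \<in> gj n A cs ls j then 1 / real (card (gj n A cs ls j)) else 0) = (\<Sum>i\<in>{i\<in>{1..n}. i \<in> gj n A cs ls j}. 1 / real (card (gj n A cs ls j)))"
      by (rule sum.inter_filter[symmetric]) simp
    also have "\<dots> = 1" unfolding eq using gj_pos[OF jL] by simp
    finally show "(\<Sum>i\<in>{1..n}. if i \<in> gj n A cs ls j then 1 / real (card (gj n A cs ls j)) else 0) = 1" .
  qed
  finally show ?thesis by simp
qed

end
end

definition compl_above :: "'c set \<Rightarrow> nat \<Rightarrow> (nat \<Rightarrow> 'c set) \<Rightarrow> nat \<Rightarrow> nat \<Rightarrow> (nat \<Rightarrow> 'c) \<Rightarrow> (nat \<Rightarrow> nat) \<Rightarrow> nat \<Rightarrow> bool" where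
  "compl_above C n A k l cs ls L \<longleftrightarrow>
    (\<forall>j\<le>L. \<forall>l'. l < l' \<longrightarrow> l' \<le> k \<longrightarrow> (\<forall>j'. j \<le> j' \<longrightarrow> j' < L \<longrightarrow> ls j' < l') \<longrightarrow>
       (\<forall>c. \<not> elig C n A k (cs ` {..<j}) l' c))"

context inst
begin

lemma valid_L_le: assumes V: "valid C n A k cs ls L" shows "L \<le> k"
proof -
  have "real L = (\<Sum>i\<in>{1..n}. pay n A cs ls L i)" using pay_sum[OF V] by simp
  also have "\<dots> \<le> (\<Sum>i\<in>{1..n}. real k / real n)" by (rule sum_mono) (rule pay_le[OF V])
  also have "\<dots> = real k" using n_pos by simp
  finally show ?thesis by simp
qed

lemma exists_max_scr:
  assumes "finite E" "E \<noteq> {}"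
  shows "\<exists>c0\<in>E. \<forall>c\<in>E. scr n A c \<le> scr n A c0"
proof -
  have "Max (scr n A ` E) \<in> scr n A ` E" using assms by simp
  then obtain c0 where c0: "c0 \<in> E" "scr n A c0 = Max (scr n A ` E)" by auto
  have "\<forall>c\<in>E. scr n A c \<le> scr n A c0" using c0(2) assms(1) by simp
  thus ?thesis using c0(1) by blast
qed

lemma ext_level:
  assumes l1: "1 \<le> l" and lk: "l \<le> k"
  shows "valid C n A k cs ls L \<Longrightarrow> (\<forall>j<L. l \<le> ls j) \<Longrightarrow> compl_above C n A k l cs ls L \<Longrightarrow>
    \<exists>cs' ls' L'. valid C n A k cs' ls' L' \<and> (\<forall>j<L'. l \<le> ls' j) \<and> compl_above C n A k (l - 1) cs' ls' L'"
proof (induction "k - L" arbitrary: cs ls L rule: less_induct)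
  case less
  note V = less.prems(1) and lev = less.prems(2) and CA = less.prems(3)
  show ?case
  proof (cases "\<exists>c. elig C n A k (cs ` {..<L}) l c")
    case False
    have "compl_above C n A k (l - 1) cs ls L"
      unfolding compl_above_def
    proof (intro allI impI)
      fix j l' c assume j: "j \<le> L" and l': "l - 1 < l'" "l' \<le> k"
        and cut: "\<forall>j'. j \<le> j' \<longrightarrow> j' < L \<longrightarrow> ls j' < l'"
      show "\<not> elig C n A k (cs ` {..<j}) l' c"
      proof (cases "l < l'")
        case True thus ?thesis using CA j l' cut unfolding compl_above_def by blast
      next
        case False
        hence ll: "l' = l" using l' l1 by auto
        have "j = L"
        proof (rule ccontr)
          assume "j \<noteq> L" hence "j < L" using j by auto
          hence "ls j < l'" using cut by auto
          thus False using lev \<open>j < L\<close> ll by force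
        qed
        thus ?thesis using False ll \<open>\<not> (\<exists>c. elig C n A k (cs ` {..<L}) l c)\<close> by blast
      qed
    qed
    thus ?thesis using V lev by blast
  next
    case True
    define E where "E = {c. elig C n A k (cs ` {..<L}) l c}"
    have EC: "E \<subseteq> C" unfolding E_def elig_def by auto
    have finE: "finite E" using finite_subset[OF EC finC] .
    have neE: "E \<noteq> {}" using True unfolding E_def by auto
    obtain c0 where c0E: "c0 \<in> E" and c0max: "\<forall>c\<in>E. scr n A c \<le> scr n A c0"
      using exists_max_scr[OF finE neE] by blast
    define cs' where "cs' = cs(L := c0)"
    define ls' where "ls' = ls(L := l)"
    have pre: "cs' ` {..<j} = cs ` {..<j}" if "j \<le> L" for j
      unfolding cs'_def using that by (auto intro!: image_cong)
    have preS: "cs' ` {..<Suc L} = insert c0 (cs ` {..<L})"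
      unfolding cs'_def by (auto simp: lessThan_Suc)
    have V': "valid C n A k cs' ls' (Suc L)"
      unfolding valid_def
    proof (intro conjI allI impI)
      fix j assume j: "j < Suc L"
      show "1 \<le> ls' j" using j l1 V_lev[OF V] unfolding ls'_def by (cases "j = L") auto
      show "ls' j \<le> k" using j lk V_lev[OF V] unfolding ls'_def by (cases "j = L") auto
      show "elig C n A k (cs' ` {..<j}) (ls' j) (cs' j)"
      proof (cases "j = L")
        case True thus ?thesis using c0E pre[of L] unfolding E_def cs'_def ls'_def by simp
      next
        case False hence "j < L" using j by auto
        thus ?thesis using V_elig[OF V] pre[of j] unfolding cs'_def ls'_def by simp
      qed
      fix c assume e: "elig C n A k (cs' ` {..<j}) (ls' j) c"
      show "scr n A c \<le> scr n A (cs' j)"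
      proof (cases "j = L")
        case True thus ?thesis using c0max e pre[of L] unfolding E_def cs'_def ls'_def by simp
      next
        case False hence jl: "j < L" using j by auto
        thus ?thesis using V_max[OF V jl, of c] e pre[of j] unfolding cs'_def ls'_def by simp
      qed
    next
      fix j j' assume jj: "j \<le> j'" "j' < Suc L"
      show "ls' j' \<le> ls' j"
      proof (cases "j' = L")
        case True
        show ?thesis
        proof (cases "j = L")
          case True thus ?thesis using \<open>j' = L\<close> by simp
        next
          case False hence "j < L" using jj by auto
          thus ?thesis using lev True unfolding ls'_def by auto
        qed
      next
        case False hence "j' < L" using jj by auto
        thus ?thesis using V_sorted[OF V jj(1)] jj unfolding ls'_def by auto
      qed
    qed
    have lev': "\<forall>j<Suc L. l \<le> ls' j" using lev unfolding ls'_def by auto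
    have CA': "compl_above C n A k l cs' ls' (Suc L)"
      unfolding compl_above_def
    proof (intro allI impI)
      fix j l' c assume j: "j \<le> Suc L" and l': "l < l'" "l' \<le> k"
        and cut: "\<forall>j'. j \<le> j' \<longrightarrow> j' < Suc L \<longrightarrow> ls' j' < l'"
      show "\<not> elig C n A k (cs' ` {..<j}) l' c"
      proof (cases "j = Suc L")
        case True
        have "\<not> elig C n A k (cs ` {..<L}) l' c" using CA l' unfolding compl_above_def by auto
        moreover have "cs ` {..<L} \<subseteq> cs' ` {..<j}" using True preS by auto
        ultimately show ?thesis using elig_mono by blast
      next
        case False hence jL: "j \<le> L" using j by auto
        have "\<forall>j'. j \<le> j' \<longrightarrow> j' < L \<longrightarrow> ls j' < l'"
          using cut unfolding ls'_def by (metis fun_upd_apply less_SucI less_irrefl)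
        hence "\<not> elig C n A k (cs ` {..<j}) l' c" using CA jL l' unfolding compl_above_def by blast
        thus ?thesis using pre[OF jL] by simp
      qed
    qed
    have "Suc L \<le> k" using valid_L_le[OF V'] .
    hence "k - Suc L < k - L" by auto
    from less.hyps[OF this V' lev' CA'] show ?thesis .
  qed
qed

lemma exists_hist: "\<exists>cs ls L. valid C n A k cs ls L \<and> compl_above C n A k 0 cs ls L"
proof -
  have "\<And>d. d \<le> k \<Longrightarrow> \<exists>cs ls L. valid C n A k cs ls L \<and> (\<forall>j<L. k - d \<le> ls j) \<and> compl_above C n A k (k - d) cs ls L"
  proof -
    fix d show "d \<le> k \<Longrightarrow> \<exists>cs ls L. valid C n A k cs ls L \<and> (\<forall>j<L. k - d \<le> ls j) \<and> compl_above C n A k (k - d) cs ls L"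
    proof (induction d)
      case 0
      have "valid C n A k (\<lambda>_. undefined) (\<lambda>_. 0) 0" unfolding valid_def by simp
      moreover have "compl_above C n A k k (\<lambda>_. undefined) (\<lambda>_. 0) 0" unfolding compl_above_def by auto
      ultimately show ?case by auto
    next
      case (Suc d)
      then obtain cs ls L where h: "valid C n A k cs ls L" "\<forall>j<L. k - d \<le> ls j" "compl_above C n A k (k - d) cs ls L"
        by auto
      have l1: "1 \<le> k - d" and lk: "k - d \<le> k" using Suc.prems by auto
      from ext_level[OF l1 lk h] obtain cs' ls' L' where
        "valid C n A k cs' ls' L'" "\<forall>j<L'. k - d \<le> ls' j" "compl_above C n A k (k - d - 1) cs' ls' L'" by blast
      moreover have "k - d - 1 = k - Suc d" by simp
      ultimately show ?case by (metis diff_le_self order_trans)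
    qed
  qed
  from this[of k] show ?thesis by auto
qed

end

context inst
begin

context
  fixes cs :: "nat \<Rightarrow> 'c" and ls :: "nat \<Rightarrow> nat" and L :: nat
  assumes V: "valid C n A k cs ls L" and CA: "compl_above C n A k 0 cs ls L"
begin

lemma final_not_elig: "1 \<le> l \<Longrightarrow> l \<le> k \<Longrightarrow> \<not> elig C n A k (cs ` {..<L}) l c"
  using CA unfolding compl_above_def by auto

lemma EJR_sup:
  assumes WG: "cs ` {..<L} \<subseteq> W" and WC: "W \<subseteq> C"
  shows "EJR_plus n A k W"
  unfolding EJR_plus_def
proof (intro ballI allI impI)
  fix l N' assume l: "l \<in> {1..k}"
    and N: "N' \<subseteq> {1..n} \<and> N' \<noteq> {} \<and> real (card N') \<ge> real l * real n / real k \<and> (\<Inter>i\<in>N'. A i) \<noteq> {}"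
  show "(\<exists>i\<in>N'. card (A i \<inter> W) \<ge> l) \<or> (\<Inter>i\<in>N'. A i) \<subseteq> W"
  proof (rule ccontr)
    assume "\<not> ?thesis"
    then have small: "\<forall>i\<in>N'. card (A i \<inter> W) < l" and "\<not> (\<Inter>i\<in>N'. A i) \<subseteq> W" by auto
    then obtain c where c: "c \<in> (\<Inter>i\<in>N'. A i)" "c \<notin> W" by auto
    obtain i0 where i0: "i0 \<in> N'" using N by auto
    have cC: "c \<in> C" using c(1) i0 AsubC N by blast
    have sub: "N' \<subseteq> grp n A (cs ` {..<L}) l c"
    proof
      fix i assume i: "i \<in> N'"
      have i1: "i \<in> {1..n}" using i N by auto
      have "card (A i \<inter> cs ` {..<L}) \<le> card (A i \<inter> W)"
        by (rule card_mono) (use finA[OF i1] WG in auto)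
      thus "i \<in> grp n A (cs ` {..<L}) l c" using small i i1 c(1) unfolding grp_def by fastforce
    qed
    have "card N' \<le> card (grp n A (cs ` {..<L}) l c)" by (rule card_mono[OF grp_fin sub])
    hence "elig C n A k (cs ` {..<L}) l c"
      unfolding elig_def using cC c(2) WG N by auto
    thus False using final_not_elig l by auto
  qed
qed

lemma cov_WG: "real L * real n / real k \<le> real (cov n A (cs ` {..<L}))"
proof -
  define Cv where "Cv = {i\<in>{1..n}. A i \<inter> cs ` {..<L} \<noteq> {}}"
  have z: "pay n A cs ls L i = 0" if "i \<in> {1..n} - Cv" for i
  proof -
    have "Jv n A cs ls L i = {}"
    proof (rule ccontr)
      assume "Jv n A cs ls L i \<noteq> {}"
      then obtain j where j: "j < L" "i \<in> gj n A cs ls j" by (auto simp: Jv_def)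
      hence "cs j \<in> A i" unfolding gj_def grp_def by auto
      thus False using that j(1) unfolding Cv_def by auto
    qed
    thus ?thesis unfolding pay_def by simp
  qed
  have "real L = (\<Sum>i\<in>{1..n}. pay n A cs ls L i)" using pay_sum[OF V] by simp
  also have "\<dots> = (\<Sum>i\<in>Cv. pay n A cs ls L i)"
    by (rule sum.mono_neutral_right) (use z in \<open>auto simp: Cv_def\<close>)
  also have "\<dots> \<le> (\<Sum>i\<in>Cv. real k / real n)"
    by (rule sum_mono) (rule pay_le[OF V], auto simp: Cv_def)
  also have "\<dots> = real (card Cv) * real k / real n" by simp
  finally have "real L \<le> real (card Cv) * real k / real n" .
  hence "real L * real n / real k \<le> real (card Cv)"
    using n_pos k_pos by (simp add: field_simps)
  moreover have "cov n A (cs ` {..<L}) = card Cv" unfolding cov_def Cv_def by simp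
  ultimately show ?thesis by simp
qed

lemma pay_term_le:
  assumes i: "i \<in> {1..n}" and jJ: "j \<in> Jv n A cs ls L i"
  shows "1 / real (card (gj n A cs ls j)) \<le> real k / (real (card (Jv n A cs ls L i)) * real n)"
proof -
  define m where "m = card (Jv n A cs ls L i)"
  have mpos: "m > 0" using jJ Jv_fin[OF V] unfolding m_def by (metis card_gt_0_iff empty_iff)
  have jL: "j < L" using jJ unfolding Jv_def by auto
  have "real m \<le> real (ls j)" using charge_lev[OF V i jJ] unfolding m_def by simp
  hence "real m * real n / real k \<le> real (ls j) * real n / real k"
    by (intro divide_right_mono mult_right_mono) auto
  also have "\<dots> \<le> real (card (gj n A cs ls j))" using gj_size[OF V jL] .
  finally have le: "real m * real n / real k \<le> real (card (gj n A cs ls j))" .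
  have pos: "real m * real n / real k > 0" using mpos n_pos k_pos by auto
  have "1 / real (card (gj n A cs ls j)) \<le> 1 / (real m * real n / real k)"
  proof (rule divide_left_mono[OF le])
    have cpos: "real (card (gj n A cs ls j)) > 0" using pos le by linarith
    show "0 < real (card (gj n A cs ls j)) * (real m * real n / real k)"
      using mult_pos_pos[OF cpos pos] by (simp add: times_divide_eq_right)
  qed simp
  thus ?thesis unfolding m_def by simp
qed

lemma rigid:
  assumes Lk: "L = k" and y: "y \<in> {1..n}"
  shows "Jv n A cs ls L y \<noteq> {} \<and> (\<forall>j\<in>Jv n A cs ls L y. real (card (gj n A cs ls j)) = real (card (Jv n A cs ls L y)) * real n / real k)"
proof -
  have allp: "\<forall>i\<in>{1..n}. pay n A cs ls L i = real k / real n"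
  proof -
    have "(\<Sum>i\<in>{1..n}. real k / real n - pay n A cs ls L i) = real n * (real k / real n) - (\<Sum>i\<in>{1..n}. pay n A cs ls L i)"
      by (simp add: sum_subtractf)
    also have "\<dots> = 0" using pay_sum[OF V] Lk n_pos by simp
    finally have s0: "(\<Sum>i\<in>{1..n}. real k / real n - pay n A cs ls L i) = 0" .
    have nn: "\<forall>i\<in>{1..n}. 0 \<le> real k / real n - pay n A cs ls L i" using pay_le[OF V] by auto
    have "\<forall>i\<in>{1..n}. real k / real n - pay n A cs ls L i = 0"
      using sum_nonneg_eq_0_iff[of "{1..n}" "\<lambda>i. real k / real n - pay n A cs ls L i"] s0 nn by simp
    thus ?thesis by simp
  qed
  have py: "pay n A cs ls L y = real k / real n" using allp y by auto
  have ne: "Jv n A cs ls L y \<noteq> {}"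
  proof
    assume "Jv n A cs ls L y = {}"
    hence "pay n A cs ls L y = 0" unfolding pay_def by simp
    thus False using py k_pos n_pos by simp
  qed
  define m where "m = card (Jv n A cs ls L y)"
  have mpos: "m > 0" using ne Jv_fin[OF V] unfolding m_def by (simp add: card_gt_0_iff)
  have s1: "(\<Sum>j\<in>Jv n A cs ls L y. real k / (real m * real n) - 1 / real (card (gj n A cs ls j))) = 0"
  proof -
    have "(\<Sum>j\<in>Jv n A cs ls L y. real k / (real m * real n) - 1 / real (card (gj n A cs ls j)))
        = real m * (real k / (real m * real n)) - pay n A cs ls L y"
      unfolding pay_def by (simp add: sum_subtractf m_def)
    also have "\<dots> = 0" using py mpos by simp
    finally show ?thesis .
  qed
  have nn: "\<forall>j\<in>Jv n A cs ls L y. 0 \<le> real k / (real m * real n) - 1 / real (card (gj n A cs ls j))"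
    using pay_term_le[OF y] unfolding m_def by auto
  have eq: "\<forall>j\<in>Jv n A cs ls L y. real k / (real m * real n) - 1 / real (card (gj n A cs ls j)) = 0"
    using sum_nonneg_eq_0_iff[OF Jv_fin[OF V], of y "\<lambda>j. real k / (real m * real n) - 1 / real (card (gj n A cs ls j))"] nn s1 by simp
  have "\<forall>j\<in>Jv n A cs ls L y. real (card (gj n A cs ls j)) = real m * real n / real k"
  proof
    fix j assume jJ: "j \<in> Jv n A cs ls L y"
    have jL: "j < L" using jJ unfolding Jv_def by auto
    have cp: "real (card (gj n A cs ls j)) > 0" using gj_pos[OF V jL] by simp
    have "1 / real (card (gj n A cs ls j)) = real k / (real m * real n)" using eq jJ by simp
    thus "real (card (gj n A cs ls j)) = real m * real n / real k"
      using cp mpos n_pos k_pos by (simp add: field_simps)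
  qed
  thus ?thesis using ne unfolding m_def by simp
qed

end
end

context inst
begin

context
  fixes cs :: "nat \<Rightarrow> 'c" and ls :: "nat \<Rightarrow> nat" and L :: nat
  assumes V: "valid C n A k cs ls L" and CA: "compl_above C n A k 0 cs ls L"
begin

lemma bcount:
  assumes cC: "cst \<in> C" and cW: "cst \<notin> cs ` {..<L}"
    and l1: "1 \<le> l" and lk: "l \<le> k"
    and lo: "real l * real n / real k \<le> real (scr n A cst)"
    and hi: "real (scr n A cst) < real (l + 1) * real n / real k"
  shows "\<exists>H. H \<subseteq> cs ` {..<L} \<and> (\<forall>w\<in>H. scr n A cst \<le> scr n A w) \<and> l \<le> card H \<and>
           ((L = k \<and> real l * real n / real k < real (scr n A cst)) \<longrightarrow> l + 1 \<le> card H)"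
proof -
  define s where "s = scr n A cst"
  define P where "P j \<longleftrightarrow> (j = L \<or> ls j < l \<or> (ls j = l \<and> \<not> elig C n A k (cs ` {..<j}) l cst))" for j
  define j0 where "j0 = (LEAST j. j \<le> L \<and> P j)"
  have PL: "L \<le> L \<and> P L" unfolding P_def by simp
  have j0P: "j0 \<le> L \<and> P j0" unfolding j0_def by (rule LeastI[of _ L], rule PL)
  have before: "l \<le> ls j \<and> (ls j = l \<longrightarrow> elig C n A k (cs ` {..<j}) l cst)" if jj: "j < j0" for j
  proof -
    have "\<not> (j \<le> L \<and> P j)" using not_less_Least[of j "\<lambda>j. j \<le> L \<and> P j"] jj unfolding j0_def by blast
    moreover have "j \<le> L" using jj j0P by auto
    ultimately have "\<not> P j" by blast
    thus ?thesis unfolding P_def by auto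
  qed
  have jlt: "j < L" if "j < j0" for j using that j0P by auto
  have notel: "\<not> elig C n A k (cs ` {..<j0}) l cst"
  proof -
    have "j0 = L \<or> ls j0 < l \<or> (ls j0 = l \<and> \<not> elig C n A k (cs ` {..<j0}) l cst)" using j0P unfolding P_def by blast
    moreover
    { assume "j0 = L"
      hence ?thesis using CA l1 lk unfolding compl_above_def by auto }
    moreover
    { assume a: "ls j0 < l" "j0 \<noteq> L"
      hence j0L: "j0 < L" using j0P by auto
      have "\<forall>j'. j0 \<le> j' \<longrightarrow> j' < L \<longrightarrow> ls j' < l"
      proof (intro allI impI)
        fix j' assume "j0 \<le> j'" "j' < L"
        thus "ls j' < l" using V_sorted[OF V, of j0 j'] a(1) by linarith
      qed
      hence ?thesis using CA l1 lk j0P unfolding compl_above_def by auto }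
    ultimately show ?thesis by blast
  qed
  have sc_before: "s \<le> scr n A (cs j)" if jj: "j < j0" for j
  proof -
    have jL: "j < L" using jlt[OF jj] .
    show ?thesis
    proof (cases "ls j = l")
      case True
      hence "elig C n A k (cs ` {..<j}) (ls j) cst" using before[OF jj] by simp
      thus ?thesis using V_max[OF V jL] unfolding s_def by blast
    next
      case False
      hence "l + 1 \<le> ls j" using before[OF jj] by auto
      hence "real (l + 1) * real n / real k \<le> real (ls j) * real n / real k"
        by (intro divide_right_mono mult_right_mono) auto
      also have "\<dots> \<le> real (card (gj n A cs ls j))" using gj_size[OF V jL] .
      also have "\<dots> \<le> real (scr n A (cs j))" using grp_scr unfolding gj_def by simp
      finally show ?thesis using hi unfolding s_def by simp
    qed
  qed
  have pre_sc: "\<forall>w\<in>cs ` {..<j0}. s \<le> scr n A w" using sc_before by auto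
  have pre_sub: "cs ` {..<j0} \<subseteq> cs ` {..<L}" using j0P by auto
  define N where "N = {i\<in>{1..n}. cst \<in> A i}"
  have cardN: "card N = s" unfolding N_def s_def scr_def by simp
  have cst_pre: "cst \<notin> cs ` {..<j0}" using cW pre_sub by auto
  have "real (card (grp n A (cs ` {..<j0}) l cst)) < real l * real n / real k"
    using notel cC cst_pre unfolding elig_def by auto
  hence "card (grp n A (cs ` {..<j0}) l cst) < card N" using lo cardN unfolding s_def by linarith
  hence "\<not> N \<subseteq> grp n A (cs ` {..<j0}) l cst"
  proof (intro notI)
    assume "N \<subseteq> grp n A (cs ` {..<j0}) l cst" "card (grp n A (cs ` {..<j0}) l cst) < card N"
    moreover from this(1) have "card N \<le> card (grp n A (cs ` {..<j0}) l cst)" by (rule card_mono[OF grp_fin])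
    ultimately show False by linarith
  qed
  then obtain y where yN: "y \<in> N" and yng: "y \<notin> grp n A (cs ` {..<j0}) l cst" by blast
  have y1: "y \<in> {1..n}" and cy: "cst \<in> A y" using yN unfolding N_def by auto
  have ybig: "l \<le> card (A y \<inter> cs ` {..<j0})" using yng y1 cy unfolding grp_def by auto
  define H0 where "H0 = A y \<inter> cs ` {..<j0}"
  have H0: "H0 \<subseteq> cs ` {..<L}" "\<forall>w\<in>H0. s \<le> scr n A w" "l \<le> card H0"
    using pre_sub pre_sc ybig unfolding H0_def by auto
  show ?thesis
  proof (cases "L = k \<and> real l * real n / real k < real s")
    case False
    thus ?thesis using H0 unfolding s_def by (intro exI[of _ H0]) blast
  next
    case True
    hence Lk: "L = k" and strict: "real l * real n / real k < real s" by auto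
    note rg = rigid[OF V CA Lk y1]
    define J where "J = Jv n A cs ls L y"
    define m where "m = card J"
    have Jne: "J \<noteq> {}" and Jeq: "\<forall>j\<in>J. real (card (gj n A cs ls j)) = real m * real n / real k"
      using rg unfolding J_def m_def by auto
    have finJ: "finite J" unfolding J_def using Jv_fin[OF V] .
    have JL: "\<forall>j\<in>J. j < L \<and> y \<in> gj n A cs ls j" unfolding J_def Jv_def by auto
    show ?thesis
    proof (cases "l + 1 \<le> m")
      case True
      define H where "H = cs ` J"
      have inj: "inj_on cs J" using V_inj[OF V] by (rule inj_on_subset) (use JL in auto)
      have "card H = m" unfolding H_def m_def using inj by (simp add: card_image)
      moreover have "H \<subseteq> cs ` {..<L}" unfolding H_def using JL by auto
      moreover have "\<forall>w\<in>H. s \<le> scr n A w"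
      proof
        fix w assume "w \<in> H"
        then obtain j where j: "j \<in> J" "w = cs j" unfolding H_def by auto
        have "real (l + 1) * real n / real k \<le> real m * real n / real k"
          using True by (intro divide_right_mono mult_right_mono) auto
        also have "\<dots> = real (card (gj n A cs ls j))" using Jeq j by simp
        also have "\<dots> \<le> real (scr n A (cs j))" using grp_scr unfolding gj_def by simp
        finally show "s \<le> scr n A w" using hi j unfolding s_def by simp
      qed
      ultimately show ?thesis using True unfolding s_def by (intro exI[of _ H]) simp
    next
      case False
      hence ml: "m \<le> l" by auto
      define jL where "jL = Max J"
      have jLJ: "jL \<in> J" unfolding jL_def using Max_in[OF finJ Jne] .
      have jLL: "jL < L" and ygj: "y \<in> gj n A cs ls jL" using JL jLJ by auto
      have lt1: "card (A y \<inter> cs ` {..<jL}) < ls jL" using ygj unfolding gj_def grp_def by auto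
      have "real (ls jL) * real n / real k \<le> real m * real n / real k"
        using gj_size[OF V jLL] Jeq jLJ by simp
      hence "real (ls jL) * real n \<le> real m * real n" using k_pos by (simp add: divide_le_cancel)
      hence "real (ls jL) \<le> real m" using n_pos by simp
      hence lsm: "ls jL \<le> m" by simp
      have jLj0: "jL < j0"
      proof (rule ccontr)
        assume "\<not> jL < j0"
        hence "cs ` {..<j0} \<subseteq> cs ` {..<jL}" by auto
        hence "card (A y \<inter> cs ` {..<j0}) \<le> card (A y \<inter> cs ` {..<jL})"
          by (intro card_mono) (use finA[OF y1] in auto)
        thus False using ybig lt1 lsm ml by linarith
      qed
      have lsl: "ls jL = l" using before[OF jLj0] lsm ml by auto
      have scj: "s \<le> scr n A (cs jL)" using sc_before[OF jLj0] .
      have "real (card (gj n A cs ls jL)) = real m * real n / real k" using Jeq jLJ by simp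
      also have "\<dots> \<le> real l * real n / real k" using ml by (intro divide_right_mono mult_right_mono) auto
      also have "\<dots> < real s" using strict .
      also have "\<dots> \<le> real (scr n A (cs jL))" using scj by simp
      finally have "card (gj n A cs ls jL) < scr n A (cs jL)" by simp
      hence "\<not> {i\<in>{1..n}. cs jL \<in> A i} \<subseteq> gj n A cs ls jL"
      proof (intro notI)
        assume a: "card (gj n A cs ls jL) < scr n A (cs jL)" "{i\<in>{1..n}. cs jL \<in> A i} \<subseteq> gj n A cs ls jL"
        have "card {i\<in>{1..n}. cs jL \<in> A i} \<le> card (gj n A cs ls jL)"
          using a(2) unfolding gj_def by (rule card_mono[OF grp_fin])
        thus False using a(1) unfolding scr_def by linarith
      qed
      then obtain e where e1: "e \<in> {1..n}" and ce: "cs jL \<in> A e" and eng: "e \<notin> gj n A cs ls jL" by auto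
      have ebig: "l \<le> card (A e \<inter> cs ` {..<jL})" using eng e1 ce lsl unfolding gj_def grp_def by auto
      define H where "H = A e \<inter> insert (cs jL) (cs ` {..<jL})"
      have cnot: "cs jL \<notin> cs ` {..<jL}" using V_elig[OF V jLL] unfolding elig_def by auto
      have "H = insert (cs jL) (A e \<inter> cs ` {..<jL})" unfolding H_def using ce by auto
      hence cH: "card H = Suc (card (A e \<inter> cs ` {..<jL}))"
        using cnot finA[OF e1] by simp
      have "H \<subseteq> cs ` {..<L}" unfolding H_def using jLL by auto
      moreover have "\<forall>w\<in>H. s \<le> scr n A w"
      proof
        fix w assume "w \<in> H"
        hence "w = cs jL \<or> w \<in> cs ` {..<jL}" unfolding H_def by auto
        thus "s \<le> scr n A w"
        proof
          assume "w \<in> cs ` {..<jL}"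
          then obtain j where "j < jL" "w = cs j" by auto
          thus ?thesis using sc_before[of j] jLj0 by auto
        qed (use scj in simp)
      qed
      ultimately show ?thesis using cH ebig unfolding s_def by (intro exI[of _ H]) simp
    qed
  qed
qed

end
end

lemma top_fill:
  fixes f :: "'a \<Rightarrow> nat"
  assumes "finite X" "m \<le> card X"
  shows "\<exists>F\<subseteq>X. card F = m \<and> (\<forall>a\<in>F. \<forall>b\<in>X - F. f b \<le> f a)"
  using assms(2)
proof (induction m)
  case 0 thus ?case by auto
next
  case (Suc m)
  then obtain F where F: "F \<subseteq> X" "card F = m" "\<forall>a\<in>F. \<forall>b\<in>X - F. f b \<le> f a" by auto
  have finF: "finite F" by (rule finite_subset[OF F(1) assms(1)])
  have fin: "finite (X - F)" using assms(1) by auto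
  have "card (X - F) = card X - card F" using card_Diff_subset[OF finF F(1)] .
  hence "card (X - F) > 0" using Suc.prems F(2) by simp
  hence ne: "X - F \<noteq> {}" by (intro notI) simp
  have "Max (f ` (X - F)) \<in> f ` (X - F)" using fin ne by simp
  then obtain a where a: "a \<in> X - F" "f a = Max (f ` (X - F))" by auto
  have amax: "\<forall>b\<in>X - F. f b \<le> f a" using a(2) fin by simp
  define F' where "F' = insert a F"
  have "F' \<subseteq> X" using F(1) a(1) unfolding F'_def by auto
  moreover have "card F' = Suc m" using a(1) finF F(2) unfolding F'_def by simp
  moreover have "\<forall>x\<in>F'. \<forall>b\<in>X - F'. f b \<le> f x"
    using F(3) amax unfolding F'_def by auto
  ultimately show ?case by blast
qed

lemma drop_one:
  fixes X :: "'a \<Rightarrow> 'b set"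
  assumes fO: "finite Ob" and cO: "card Ob = Suc m" and fX: "\<And>c. finite (X c)"
  shows "\<exists>c\<in>Ob. real (Suc m) * real (card (\<Union>(X ` (Ob - {c})))) \<ge> real m * real (card (\<Union>(X ` Ob)))"
proof -
  define U where "U = \<Union>(X ` Ob)"
  define P where "P c = X c - \<Union>(X ` (Ob - {c}))" for c
  have finU: "finite U" unfolding U_def using fO fX by auto
  have disj: "\<forall>i\<in>Ob. \<forall>j\<in>Ob. i \<noteq> j \<longrightarrow> P i \<inter> P j = {}" unfolding P_def by auto
  have PU: "\<Union>(P ` Ob) \<subseteq> U" unfolding P_def U_def by auto
  have finP: "\<forall>c\<in>Ob. finite (P c)" unfolding P_def using fX by auto
  have "(\<Sum>c\<in>Ob. card (P c)) = card (\<Union>(P ` Ob))"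
    using card_UN_disjoint[OF fO finP disj] by simp
  also have "\<dots> \<le> card U" using card_mono[OF finU PU] .
  finally have sumP: "(\<Sum>c\<in>Ob. card (P c)) \<le> card U" .
  have ne: "Ob \<noteq> {}" using cO by auto
  have "Min ((\<lambda>c. card (P c)) ` Ob) \<in> (\<lambda>c. card (P c)) ` Ob" using fO ne by simp
  then obtain c0 where c0: "c0 \<in> Ob" "card (P c0) = Min ((\<lambda>c. card (P c)) ` Ob)" by auto
  have cmin: "\<forall>c\<in>Ob. card (P c0) \<le> card (P c)" using c0(2) fO by simp
  have "real (Suc m) * real (card (P c0)) = (\<Sum>c\<in>Ob. real (card (P c0)))" using cO by simp
  also have "\<dots> \<le> (\<Sum>c\<in>Ob. real (card (P c)))" by (rule sum_mono) (use cmin in auto)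
  also have "\<dots> \<le> real (card U)" using sumP by (simp flip: of_nat_sum)
  finally have pc: "real (Suc m) * real (card (P c0)) \<le> real (card U)" .
  have eqU: "\<Union>(X ` (Ob - {c0})) = U - P c0" unfolding U_def P_def using c0(1) by blast
  have sub: "P c0 \<subseteq> U" unfolding P_def U_def using c0(1) by auto
  have "card (\<Union>(X ` (Ob - {c0}))) = card U - card (P c0)" unfolding eqU
    using card_Diff_subset[OF finite_subset[OF sub finU] sub] .
  hence cr: "real (card (\<Union>(X ` (Ob - {c0})))) = real (card U) - real (card (P c0))"
    using card_mono[OF finU sub] by simp
  have key: "real m * real (card U) \<le> real (Suc m) * (real (card U) - real (card (P c0)))"
    using pc by (simp add: algebra_simps)
  have "real (Suc m) * real (card (\<Union>(X ` (Ob - {c0})))) \<ge> real m * real (card U)" unfolding cr by (rule key)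
  hence "real (Suc m) * real (card (\<Union>(X ` (Ob - {c0})))) \<ge> real m * real (card (\<Union>(X ` Ob)))" unfolding U_def .
  thus ?thesis using c0(1) by (rule bexI)
qed

lemma sub_cover:
  fixes X :: "'a \<Rightarrow> 'b set"
  assumes fX: "\<And>c. finite (X c)"
  shows "finite Ob \<Longrightarrow> r \<le> card Ob \<Longrightarrow> \<exists>R\<subseteq>Ob. card R = r \<and> real r * real (card (\<Union>(X ` Ob))) \<le> real (card Ob) * real (card (\<Union>(X ` R)))"
proof (induction "card Ob - r" arbitrary: Ob)
  case 0
  hence "card Ob = r" by linarith
  thus ?case by (intro exI[of _ Ob]) simp
next
  case (Suc d)
  show ?case
  proof (cases "r = 0")
    case True thus ?thesis by (intro exI[of _ "{}"]) simp
  next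
    case False
    hence rne: "r \<noteq> 0" .
    have "card Ob \<noteq> 0" using Suc.hyps(2) by linarith
    then obtain m where cO: "card Ob = Suc m" using not0_implies_Suc by blast
    from drop_one[OF Suc.prems(1) cO fX] obtain c where c: "c \<in> Ob" and cc: "real (Suc m) * real (card (\<Union>(X ` (Ob - {c})))) \<ge> real m * real (card (\<Union>(X ` Ob)))"
      by (rule bexE)
    have fO': "finite (Ob - {c})" using Suc.prems(1) by simp
    have cO': "card (Ob - {c}) = m" using cO c Suc.prems(1) by simp
    have dd: "d = card (Ob - {c}) - r" using Suc.hyps(2) cO' cO by simp
    have rr: "r \<le> card (Ob - {c})" using Suc.hyps(2) Suc.prems(2) cO' cO by simp
    from Suc.hyps(1)[OF dd fO' rr] obtain R where R0: "R \<subseteq> Ob - {c} \<and> card R = r \<and>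
      real r * real (card (\<Union>(X ` (Ob - {c})))) \<le> real (card (Ob - {c})) * real (card (\<Union>(X ` R)))"
      by (rule exE)
    note R = conjunct1[OF R0] conjunct1[OF conjunct2[OF R0]] conjunct2[OF conjunct2[OF R0]]
    have mpos: "real m > 0" using Suc.hyps(2) cO rne by simp
    define a where "a = real (card (\<Union>(X ` R)))"
    define b where "b = real (card (\<Union>(X ` (Ob - {c}))))"
    define u where "u = real (card (\<Union>(X ` Ob)))"
    have h1: "real r * b \<le> real m * a" using R(3) cO' unfolding a_def b_def by simp
    have h2: "real m * u \<le> real (Suc m) * b" using cc unfolding b_def u_def by simp
    have r0: "0 \<le> real r" by simp
    have "real m * (real r * u) = real r * (real m * u)" by (simp add: algebra_simps)
    also have "\<dots> \<le> real r * (real (Suc m) * b)" using mult_left_mono[OF h2 r0] .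
    also have "\<dots> = real (Suc m) * (real r * b)" by (simp add: algebra_simps)
    also have "\<dots> \<le> real (Suc m) * (real m * a)" using mult_left_mono[OF h1, of "real (Suc m)"] by simp
    also have "\<dots> = real m * (real (Suc m) * a)" by (simp add: algebra_simps)
    finally have "real m * (real r * u) \<le> real m * (real (Suc m) * a)" .
    hence fin: "real r * u \<le> real (Suc m) * a" using mult_left_le_imp_le[OF _ mpos] by blast
    have RO: "R \<subseteq> Ob" using R(1) by blast
    show ?thesis
      by (rule exI[of _ R]) (use RO R(2) fin cO in \<open>simp add: a_def u_def\<close>)
  qed
qed

context inst
begin

lemma sw_scr: assumes "W \<subseteq> C" shows "sw n A W = (\<Sum>c\<in>W. scr n A c)"
proof -
  have fW: "finite W" by (rule finite_subset[OF assms finC])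
  have "sw n A W = (\<Sum>i\<in>{1..n}. \<Sum>c\<in>W. if c \<in> A i then 1 else 0)"
    unfolding sw_def
  proof (rule sum.cong[OF refl])
    fix i assume "i \<in> {1..n}"
    have "card (A i \<inter> W) = card {c\<in>W. c \<in> A i}" by (rule arg_cong[where f=card]) auto
    also have "\<dots> = (\<Sum>c\<in>{c\<in>W. c \<in> A i}. 1)" by simp
    also have "\<dots> = (\<Sum>c\<in>W. if c \<in> A i then 1 else 0)" by (rule sum.inter_filter[OF fW])
    finally show "card (A i \<inter> W) = (\<Sum>c\<in>W. if c \<in> A i then 1 else 0)" .
  qed
  also have "\<dots> = (\<Sum>c\<in>W. \<Sum>i\<in>{1..n}. if c \<in> A i then 1 else 0)" by (rule sum.swap)
  also have "\<dots> = (\<Sum>c\<in>W. scr n A c)"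
  proof (rule sum.cong[OF refl])
    fix c assume "c \<in> W"
    have "(\<Sum>i\<in>{1..n}. if c \<in> A i then 1 else 0) = (\<Sum>i\<in>{i\<in>{1..n}. c \<in> A i}. (1::nat))"
      by (rule sum.inter_filter[symmetric]) simp
    also have "\<dots> = scr n A c" unfolding scr_def by simp
    finally show "(\<Sum>i\<in>{1..n}. if c \<in> A i then 1 else 0) = scr n A c" .
  qed
  finally show ?thesis .
qed

lemma opt_sw_attained: "\<exists>Ob. Ob \<subseteq> C \<and> card Ob = k \<and> opt_sw C n A k = sw n A Ob"
proof -
  define S where "S = {sw n A W' | W'. W' \<subseteq> C \<and> card W' = k}"
  have "S = (\<lambda>W'. sw n A W') ` {W'. W' \<subseteq> C \<and> card W' = k}" unfolding S_def by auto
  hence fS: "finite S" using finC by simp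
  obtain W0 where "W0 \<subseteq> C" "card W0 = k" using k_le obtain_subset_with_card_n by metis
  hence neS: "S \<noteq> {}" unfolding S_def by auto
  have "Max S \<in> S" using fS neS by simp
  thus ?thesis unfolding opt_sw_def S_def by auto
qed

lemma opt_cov_attained: "\<exists>Ob. Ob \<subseteq> C \<and> card Ob = k \<and> opt_cov C n A k = cov n A Ob"
proof -
  define S where "S = {cov n A W' | W'. W' \<subseteq> C \<and> card W' = k}"
  have "S = (\<lambda>W'. cov n A W') ` {W'. W' \<subseteq> C \<and> card W' = k}" unfolding S_def by auto
  hence fS: "finite S" using finC by simp
  obtain W0 where "W0 \<subseteq> C" "card W0 = k" using k_le obtain_subset_with_card_n by metis
  hence neS: "S \<noteq> {}" unfolding S_def by auto
  have "Max S \<in> S" using fS neS by simp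
  thus ?thesis unfolding opt_cov_def S_def by auto
qed

lemma cov_le_n: "cov n A W \<le> n"
proof -
  have "{i\<in>{1..n}. A i \<inter> W \<noteq> {}} \<subseteq> {1..n}" by auto
  hence "cov n A W \<le> card {1..n}" unfolding cov_def by (intro card_mono) auto
  thus ?thesis by simp
qed

lemma util_from_M:
  fixes s \<tau> :: real
  assumes WC: "W \<subseteq> C" and out: "\<forall>c\<in>C - W. real (scr n A c) \<le> s" and s0: "0 \<le> s"
    and t0: "0 \<le> \<tau>" and t1: "\<tau> \<le> 1"
    and M: "\<tau> * real k * s \<le> (\<Sum>w\<in>W. min (real (scr n A w)) s)"
  shows "\<tau> * real (opt_sw C n A k) \<le> real (sw n A W)"
proof -
  obtain Ob where Ob: "Ob \<subseteq> C" "card Ob = k" "opt_sw C n A k = sw n A Ob" using opt_sw_attained by blast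
  have fW: "finite W" by (rule finite_subset[OF WC finC])
  have fO: "finite Ob" by (rule finite_subset[OF Ob(1) finC])
  define E where "E = (\<Sum>w\<in>W. max (real (scr n A w) - s) 0)"
  have E0: "0 \<le> E" unfolding E_def by (rule sum_nonneg) auto
  have U: "real (sw n A W) = (\<Sum>w\<in>W. min (real (scr n A w)) s) + E"
  proof -
    have "real (sw n A W) = (\<Sum>w\<in>W. real (scr n A w))" using sw_scr[OF WC] by simp
    also have "\<dots> = (\<Sum>w\<in>W. min (real (scr n A w)) s + max (real (scr n A w) - s) 0)"
      by (rule sum.cong) auto
    also have "\<dots> = (\<Sum>w\<in>W. min (real (scr n A w)) s) + E" unfolding E_def by (simp add: sum.distrib)
    finally show ?thesis .
  qed
  have "real (opt_sw C n A k) = (\<Sum>c\<in>Ob. real (scr n A c))" using Ob(3) sw_scr[OF Ob(1)] by simp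
  also have "\<dots> \<le> (\<Sum>c\<in>Ob. s + (if c \<in> W then max (real (scr n A c) - s) 0 else 0))"
  proof (rule sum_mono)
    fix c assume c: "c \<in> Ob"
    show "real (scr n A c) \<le> s + (if c \<in> W then max (real (scr n A c) - s) 0 else 0)"
      using out c Ob(1) by (cases "c \<in> W") auto
  qed
  also have "\<dots> = real k * s + (\<Sum>c\<in>Ob. if c \<in> W then max (real (scr n A c) - s) 0 else 0)"
    using Ob(2) by (simp add: sum.distrib)
  also have "(\<Sum>c\<in>Ob. if c \<in> W then max (real (scr n A c) - s) 0 else 0) = (\<Sum>c\<in>Ob \<inter> W. max (real (scr n A c) - s) 0)"
    using fO by (simp add: sum.If_cases Int_def)
  also have "\<dots> \<le> E" unfolding E_def by (rule sum_mono2[OF fW]) auto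
  finally have opt: "real (opt_sw C n A k) \<le> real k * s + E" by simp
  have "\<tau> * real (opt_sw C n A k) \<le> \<tau> * (real k * s + E)" by (rule mult_left_mono[OF opt t0])
  also have "\<dots> = \<tau> * real k * s + \<tau> * E" by (simp add: algebra_simps)
  also have "\<dots> \<le> (\<Sum>w\<in>W. min (real (scr n A w)) s) + E"
  proof -
    have "\<tau> * E \<le> 1 * E" using mult_right_mono[OF t1 E0] .
    thus ?thesis using M by linarith
  qed
  also have "\<dots> = real (sw n A W)" using U by simp
  finally show ?thesis .
qed

end

lemma sqrt_facts:
  fixes k :: nat assumes k1: "1 \<le> k"
  shows "sqrt (real k) \<ge> 1" and "(2 / sqrt (real k) - 1 / real k) * real k = 2 * sqrt (real k) - 1"
    and "0 \<le> 2 / sqrt (real k) - 1 / real k" and "2 / sqrt (real k) - 1 / real k \<le> 1"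
    and "2 * sqrt (real k) - 1 \<le> real k"
proof -
  have kp: "real k \<ge> 1" using k1 by simp
  show s1: "sqrt (real k) \<ge> 1" using kp by simp
  have sq: "sqrt (real k) * sqrt (real k) = real k" using kp by simp
  have sp: "sqrt (real k) > 0" using s1 by simp
  show "(2 / sqrt (real k) - 1 / real k) * real k = 2 * sqrt (real k) - 1"
  proof -
    have "(2 / sqrt (real k) - 1 / real k) * real k = 2 * (real k / sqrt (real k)) - 1"
      using kp by (simp add: algebra_simps)
    also have "real k / sqrt (real k) = sqrt (real k)" using sq sp by (simp add: field_simps)
    finally show ?thesis by simp
  qed
  have sk: "sqrt (real k) \<le> real k"
  proof -
    have "sqrt (real k) * 1 \<le> sqrt (real k) * sqrt (real k)" using s1 sp by (intro mult_left_mono) auto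
    thus ?thesis using sq by simp
  qed
  have a: "1 / real k \<le> 1 / sqrt (real k)"
    by (rule divide_left_mono[OF sk]) (use sp kp in auto)
  show "0 \<le> 2 / sqrt (real k) - 1 / real k"
  proof -
    have "1 / sqrt (real k) \<le> 2 / sqrt (real k)" using sp by (simp add: divide_right_mono)
    thus ?thesis using a by linarith
  qed
  have b: "(sqrt (real k) - 1) * (sqrt (real k) - 1) \<ge> 0" by simp
  hence "real k - 2 * sqrt (real k) + 1 \<ge> 0" using sq by (simp add: algebra_simps)
  thus "2 * sqrt (real k) - 1 \<le> real k" by linarith
  show "2 / sqrt (real k) - 1 / real k \<le> 1"
  proof -
    have "(2 / sqrt (real k) - 1 / real k) * real k \<le> 1 * real k"
      using \<open>2 * sqrt (real k) - 1 \<le> real k\<close> \<open>(2 / sqrt (real k) - 1 / real k) * real k = 2 * sqrt (real k) - 1\<close> by simp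
    thus ?thesis using kp by (simp add: mult_le_cancel_right)
  qed
qed

context inst
begin

lemma cov_mono: "W \<subseteq> W' \<Longrightarrow> cov n A W \<le> cov n A W'"
  unfolding cov_def by (rule card_mono) auto

lemma scr_WG:
  assumes V: "valid C n A k cs ls L" and w: "w \<in> cs ` {..<L}"
  shows "real n / real k \<le> real (scr n A w)"
proof -
  obtain j where j: "j < L" "w = cs j" using w by auto
  have "real n / real k = 1 * real n / real k" by simp
  also have "\<dots> \<le> real (ls j) * real n / real k"
    using V_lev[OF V j(1)] by (intro divide_right_mono mult_right_mono) auto
  also have "\<dots> \<le> real (card (gj n A cs ls j))" using gj_size[OF V j(1)] .
  also have "\<dots> \<le> real (scr n A w)" using grp_scr j(2) unfolding gj_def by simp
  finally show ?thesis .
qed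

end

lemma arith2:
  fixes b k x s :: real
  assumes xp: "x > 0" and kp: "k > 0" and bs: "s \<le> b * x / k" and sx: "x / k < s"
  shows "(2 * sqrt k - 1) * s \<le> b * s + (k - b) * (x / k)"
proof -
  have sq: "sqrt k * sqrt k = k" using kp by simp
  have bge: "s * k / x \<le> b" using bs xp kp by (simp add: field_simps)
  have d0: "0 \<le> s - x / k" using sx by simp
  have e1: "b * s + (k - b) * (x / k) = b * (s - x / k) + x" using kp by (simp add: field_simps)
  have "(s * k / x) * (s - x / k) \<le> b * (s - x / k)" using bge d0 by (rule mult_right_mono)
  moreover have "(s * k / x) * (s - x / k) + x = (k * s * s + x * x) / x - s"
    using xp kp by (simp add: field_simps)
  moreover have "2 * sqrt k * s \<le> (k * s * s + x * x) / x"
  proof -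
    have "0 \<le> (sqrt k * s - x) * (sqrt k * s - x)" by simp
    hence "2 * sqrt k * s * x \<le> k * s * s + x * x" using sq by (simp add: algebra_simps)
    thus ?thesis using xp by (simp add: le_divide_eq)
  qed
  ultimately show ?thesis using e1 by (simp add: algebra_simps)
qed

context inst
begin

lemma regime1:
  assumes V: "valid C n A k cs ls L" and CA: "compl_above C n A k 0 cs ls L"
    and tk: "L + t \<le> k" and tup: "real t \<le> 2 * sqrt (real k)" and tlo: "2 * sqrt (real k) - 1 \<le> real t"
    and t1: "1 \<le> t"
  shows "\<exists>W. committee C k W \<and> EJR_plus n A k W \<and> rep_ratio C n A k W \<ge> 3/4 - 2 / sqrt (real k)
           \<and> util_ratio C n A k W \<ge> 2 / sqrt (real k) - 1 / real k"
proof -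
  define WG where "WG = cs ` {..<L}"
  have WGC: "WG \<subseteq> C" using V_WG_sub[OF V] unfolding WG_def .
  have cWG: "card WG = L" using V_card[OF V] unfolding WG_def .
  have finWG: "finite WG" by (rule finite_subset[OF WGC finC])
  define X where "X = C - WG"
  have finX: "finite X" using finC unfolding X_def by simp
  have cX: "card X = card C - L" unfolding X_def using card_Diff_subset[OF finWG WGC] cWG by simp
  have tX: "t \<le> card X" using cX tk k_le by simp
  obtain F where F: "F \<subseteq> X" "card F = t" "\<forall>a\<in>F. \<forall>b\<in>X - F. scr n A b \<le> scr n A a"
    using top_fill[OF finX tX, of "scr n A"] by blast
  obtain Oc where Oc: "Oc \<subseteq> C" "card Oc = k" "opt_cov C n A k = cov n A Oc" using opt_cov_attained by blast
  define r where "r = k - L - t"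
  define V0 where "V0 = {i\<in>{1..n}. A i \<inter> WG \<noteq> {}}"
  define Xf where "Xf c = {i\<in>{1..n} - V0. c \<in> A i}" for c
  have fXf: "\<And>c. finite (Xf c)" unfolding Xf_def by simp
  have finOc: "finite Oc" by (rule finite_subset[OF Oc(1) finC])
  have rOc: "r \<le> card Oc" using Oc(2) unfolding r_def by simp
  from sub_cover[OF fXf finOc rOc] obtain R where R0: "R \<subseteq> Oc \<and> card R = r \<and>
     real r * real (card (\<Union>(Xf ` Oc))) \<le> real (card Oc) * real (card (\<Union>(Xf ` R)))"
    by (rule exE)
  have RO: "R \<subseteq> Oc" and cR: "card R = r"
    and Rineq: "real r * real (card (\<Union>(Xf ` Oc))) \<le> real k * real (card (\<Union>(Xf ` R)))"
    using R0 Oc(2) by auto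
  define W where "W = WG \<union> F \<union> R"
  have WC: "W \<subseteq> C" using WGC F(1) RO Oc(1) unfolding W_def X_def by auto
  have finW: "finite W" by (rule finite_subset[OF WC finC])
  have finF: "finite F" by (rule finite_subset[OF F(1) finX])
  have finR: "finite R" by (rule finite_subset[OF RO finOc])
  have cW: "card W \<le> k"
  proof -
    have "card W \<le> card (WG \<union> F) + card R" unfolding W_def by (rule card_Un_le)
    also have "\<dots> \<le> card WG + card F + card R" using card_Un_le[of WG F] by simp
    also have "\<dots> = k" using cWG F(2) cR tk unfolding r_def by simp
    finally show ?thesis .
  qed
  have comm: "committee C k W" unfolding committee_def using WC cW by simp
  have ejr: "EJR_plus n A k W" by (rule EJR_sup[OF V CA _ WC]) (unfold W_def WG_def, blast)
  have Fne: "F \<noteq> {}" using F(2) t1 by auto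
  define s where "s = real (Min (scr n A ` F))"
  have smin: "\<forall>w\<in>F. s \<le> real (scr n A w)" unfolding s_def using finF by simp
  have s0: "0 \<le> s" unfolding s_def by simp
  have out: "\<forall>c\<in>C - W. real (scr n A c) \<le> s"
  proof
    fix c assume c: "c \<in> C - W"
    hence cXF: "c \<in> X - F" unfolding W_def X_def by auto
    have "Min (scr n A ` F) \<in> scr n A ` F" using finF Fne by simp
    then obtain a where a: "a \<in> F" "scr n A a = Min (scr n A ` F)" by auto
    have "scr n A c \<le> scr n A a" using F(3) a(1) cXF by blast
    thus "real (scr n A c) \<le> s" unfolding s_def using a(2) by simp
  qed
  define \<tau> where "\<tau> = 2 / sqrt (real k) - 1 / real k"
  note sf = sqrt_facts[OF k_pos]
  have \<tau>k: "\<tau> * real k = 2 * sqrt (real k) - 1" unfolding \<tau>_def using sf(2) .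
  have M: "\<tau> * real k * s \<le> (\<Sum>w\<in>W. min (real (scr n A w)) s)"
  proof -
    have "\<tau> * real k * s \<le> real t * s" unfolding \<tau>k using tlo s0 by (rule mult_right_mono)
    also have "\<dots> = (\<Sum>w\<in>F. s)" using F(2) by simp
    also have "\<dots> = (\<Sum>w\<in>F. min (real (scr n A w)) s)" by (rule sum.cong) (use smin in auto)
    also have "\<dots> \<le> (\<Sum>w\<in>W. min (real (scr n A w)) s)"
      by (rule sum_mono2[OF finW]) (use s0 in \<open>auto simp: W_def\<close>)
    finally show ?thesis .
  qed
  have ut: "\<tau> * real (opt_sw C n A k) \<le> real (sw n A W)"
    by (rule util_from_M[OF WC out s0 _ _ M]) (use sf in \<open>auto simp: \<tau>_def\<close>)
  have util: "util_ratio C n A k W \<ge> \<tau>"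
  proof (cases "opt_sw C n A k = 0")
    case True thus ?thesis unfolding util_ratio_def \<tau>_def using sf by simp
  next
    case False
    hence "real (opt_sw C n A k) > 0" by simp
    hence "\<tau> \<le> real (sw n A W) / real (opt_sw C n A k)" using ut by (simp add: le_divide_eq)
    thus ?thesis unfolding util_ratio_def using False by simp
  qed
  define \<Omega> where "\<Omega> = real (opt_cov C n A k)"
  define c0 where "c0 = real (card V0)"
  define nc where "nc = real (card (\<Union>(Xf ` R)))"
  define uo where "uo = real (card (\<Union>(Xf ` Oc)))"
  have c0cov: "c0 = real (cov n A WG)" unfolding c0_def V0_def cov_def by simp
  have c0lo: "real L * real n / real k \<le> c0" using cov_WG[OF V CA] unfolding c0cov WG_def .
  have \<Omega>n: "\<Omega> \<le> real n" unfolding \<Omega>_def using cov_le_n[of Oc] Oc(3) by simp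
  have \<Omega>0: "0 \<le> \<Omega>" unfolding \<Omega>_def by simp
  have covW: "c0 + nc \<le> real (cov n A W)"
  proof -
    have disj: "V0 \<inter> \<Union>(Xf ` R) = {}" unfolding Xf_def by auto
    have sub: "V0 \<union> \<Union>(Xf ` R) \<subseteq> {i\<in>{1..n}. A i \<inter> W \<noteq> {}}"
    proof
      fix i assume "i \<in> V0 \<union> \<Union>(Xf ` R)"
      thus "i \<in> {i\<in>{1..n}. A i \<inter> W \<noteq> {}}"
      proof
        assume "i \<in> V0" thus ?thesis unfolding V0_def W_def by auto
      next
        assume "i \<in> \<Union>(Xf ` R)"
        then obtain c where "c \<in> R" "i \<in> Xf c" by auto
        thus ?thesis unfolding Xf_def W_def by auto
      qed
    qed
    have fin1: "finite V0" unfolding V0_def by simp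
    have fin2: "finite (\<Union>(Xf ` R))" using finR fXf by simp
    have "card V0 + card (\<Union>(Xf ` R)) = card (V0 \<union> \<Union>(Xf ` R))" using card_Un_disjoint[OF fin1 fin2 disj] by simp
    also have "\<dots> \<le> cov n A W" unfolding cov_def by (rule card_mono[OF _ sub]) simp
    finally show ?thesis unfolding c0_def nc_def by linarith
  qed
  have uolo: "\<Omega> - c0 \<le> uo"
  proof -
    have sub: "{i\<in>{1..n}. A i \<inter> Oc \<noteq> {}} \<subseteq> V0 \<union> \<Union>(Xf ` Oc)" unfolding V0_def Xf_def by auto
    have fin1: "finite V0" unfolding V0_def by simp
    have fin2: "finite (\<Union>(Xf ` Oc))" using finOc fXf by simp
    have "cov n A Oc \<le> card (V0 \<union> \<Union>(Xf ` Oc))" unfolding cov_def by (rule card_mono[OF _ sub]) (use fin1 fin2 in simp)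
    also have "\<dots> \<le> card V0 + card (\<Union>(Xf ` Oc))" by (rule card_Un_le)
    finally show ?thesis unfolding \<Omega>_def c0_def uo_def Oc(3) by linarith
  qed
  define a where "a = real L / real k"
  define q where "q = real t / real k"
  define \<rho> where "\<rho> = real r / real k"
  have kp: "real k > 0" using k_pos by simp
  have rr: "real r = real k - real L - real t" unfolding r_def using tk by simp
  have \<rho>eq: "\<rho> = 1 - a - q" unfolding \<rho>_def a_def q_def rr using kp by (simp add: diff_divide_distrib)
  have \<rho>0: "0 \<le> \<rho>" unfolding \<rho>_def by simp
  have a0: "0 \<le> a" unfolding a_def by simp
  have q0: "0 \<le> q" unfolding q_def by simp
  have \<rho>1: "\<rho> \<le> 1" using \<rho>eq a0 q0 by simp
  have nclo: "\<rho> * (\<Omega> - c0) \<le> nc"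
  proof -
    have "\<rho> * (\<Omega> - c0) \<le> \<rho> * uo" using uolo \<rho>0 by (rule mult_left_mono)
    also have "\<dots> = real r * uo / real k" unfolding \<rho>_def by simp
    also have "\<dots> \<le> nc" using Rineq kp unfolding uo_def nc_def by (simp add: divide_le_eq mult.commute)
    finally show ?thesis .
  qed
  have c0a: "a * \<Omega> \<le> c0"
  proof -
    have "a * \<Omega> \<le> a * real n" using \<Omega>n a0 by (rule mult_left_mono)
    also have "\<dots> = real L * real n / real k" unfolding a_def by simp
    finally show ?thesis using c0lo by linarith
  qed
  have key: "(1 - \<rho>) * a + \<rho> \<ge> 3/4 - q"
  proof -
    have "(1 - \<rho>) * a + \<rho> = (a - 1/2) * (a - 1/2) + 3/4 - q + a * q" unfolding \<rho>eq by (simp add: algebra_simps)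
    moreover have "(a - 1/2) * (a - 1/2) \<ge> 0" by simp
    moreover have "a * q \<ge> 0" using a0 q0 by simp
    ultimately show ?thesis by linarith
  qed
  have covlo: "(3/4 - q) * \<Omega> \<le> real (cov n A W)"
  proof -
    have "(3/4 - q) * \<Omega> \<le> ((1 - \<rho>) * a + \<rho>) * \<Omega>" using key \<Omega>0 by (rule mult_right_mono)
    also have "\<dots> = (1 - \<rho>) * (a * \<Omega>) + \<rho> * \<Omega>" by (simp add: algebra_simps)
    also have "\<dots> \<le> (1 - \<rho>) * c0 + \<rho> * \<Omega>" using c0a \<rho>1 by (simp add: mult_left_mono)
    also have "\<dots> = c0 + \<rho> * (\<Omega> - c0)" by (simp add: algebra_simps)
    also have "\<dots> \<le> c0 + nc" using nclo by simp
    also have "\<dots> \<le> real (cov n A W)" using covW .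
    finally show ?thesis .
  qed
  have sp: "sqrt (real k) > 0" using kp by simp
  have skk: "2 * sqrt (real k) / real k = 2 / sqrt (real k)"
  proof -
    have "sqrt (real k) * sqrt (real k) = real k" using kp by simp
    thus ?thesis using sp by (simp add: field_simps)
  qed
  have q2: "q \<le> 2 / sqrt (real k)"
  proof -
    have "q = real t / real k" unfolding q_def ..
    also have "\<dots> \<le> 2 * sqrt (real k) / real k" using tup kp by (simp add: divide_right_mono)
    finally show ?thesis using skk by simp
  qed
  have rep: "rep_ratio C n A k W \<ge> 3/4 - 2 / sqrt (real k)"
  proof (cases "opt_cov C n A k = 0")
    case True
    have "0 \<le> 2 / sqrt (real k)" using sp by simp
    hence "3/4 - 2 / sqrt (real k) \<le> 1" by linarith
    thus ?thesis unfolding rep_ratio_def using True by simp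
  next
    case False
    hence \<Omega>p: "\<Omega> > 0" unfolding \<Omega>_def by simp
    have "(3/4 - 2 / sqrt (real k)) * \<Omega> \<le> (3/4 - q) * \<Omega>" using q2 \<Omega>0 by (intro mult_right_mono) auto
    also have "\<dots> \<le> real (cov n A W)" using covlo .
    finally have "3/4 - 2 / sqrt (real k) \<le> real (cov n A W) / \<Omega>" using \<Omega>p by (simp add: le_divide_eq)
    thus ?thesis unfolding rep_ratio_def \<Omega>_def using False by simp
  qed
  show ?thesis using comm ejr rep util unfolding \<tau>_def by blast
qed

end

context inst
begin

lemma regime2:
  assumes V: "valid C n A k cs ls L" and CA: "compl_above C n A k 0 cs ls L"
    and tk: "k < L + t" and tup: "real t \<le> 2 * sqrt (real k)"
  shows "\<exists>W. committee C k W \<and> EJR_plus n A k W \<and> rep_ratio C n A k W \<ge> 3/4 - 2 / sqrt (real k)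
           \<and> util_ratio C n A k W \<ge> 2 / sqrt (real k) - 1 / real k"
proof -
  define WG where "WG = cs ` {..<L}"
  have WGC: "WG \<subseteq> C" using V_WG_sub[OF V] unfolding WG_def .
  have cWG: "card WG = L" using V_card[OF V] unfolding WG_def .
  have Lk: "L \<le> k" using valid_L_le[OF V] .
  have finWG: "finite WG" by (rule finite_subset[OF WGC finC])
  define X where "X = C - WG"
  have finX: "finite X" using finC unfolding X_def by simp
  have cX: "card X = card C - L" unfolding X_def using card_Diff_subset[OF finWG WGC] cWG by simp
  have mX: "k - L \<le> card X" using cX k_le by simp
  obtain F where F: "F \<subseteq> X" "card F = k - L" "\<forall>a\<in>F. \<forall>b\<in>X - F. scr n A b \<le> scr n A a"
    using top_fill[OF finX mX, of "scr n A"] by blast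
  define W where "W = WG \<union> F"
  have WC: "W \<subseteq> C" using WGC F(1) unfolding W_def X_def by auto
  have finW: "finite W" by (rule finite_subset[OF WC finC])
  have finF: "finite F" by (rule finite_subset[OF F(1) finX])
  have dWF: "WG \<inter> F = {}" using F(1) unfolding X_def by auto
  have cW: "card W = k" unfolding W_def using card_Un_disjoint[OF finWG finF dWF] cWG F(2) Lk by simp
  have comm: "committee C k W" unfolding committee_def using WC cW by simp
  have ejr: "EJR_plus n A k W" by (rule EJR_sup[OF V CA _ WC]) (unfold W_def WG_def, blast)
  note sf = sqrt_facts[OF k_pos]
  have kp: "real k > 0" using k_pos by simp
  have np: "real n > 0" using n_pos by simp
  have sp: "sqrt (real k) > 0" using kp by simp
  have skk: "2 * sqrt (real k) / real k = 2 / sqrt (real k)"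
  proof -
    have "sqrt (real k) * sqrt (real k) = real k" using kp by simp
    thus ?thesis using sp by (simp add: field_simps)
  qed
  have rep: "rep_ratio C n A k W \<ge> 3/4 - 2 / sqrt (real k)"
  proof (cases "opt_cov C n A k = 0")
    case True
    have "0 \<le> 2 / sqrt (real k)" using sp by simp
    hence "3/4 - 2 / sqrt (real k) \<le> 1" by linarith
    thus ?thesis unfolding rep_ratio_def using True by simp
  next
    case False
    define \<Omega> where "\<Omega> = real (opt_cov C n A k)"
    obtain Oc where Oc: "Oc \<subseteq> C" "card Oc = k" "opt_cov C n A k = cov n A Oc" using opt_cov_attained by blast
    have \<Omega>n: "\<Omega> \<le> real n" unfolding \<Omega>_def using cov_le_n[of Oc] Oc(3) by simp
    have \<Omega>p: "\<Omega> > 0" unfolding \<Omega>_def using False by simp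
    have c0: "real L * real n / real k \<le> real (cov n A WG)" using cov_WG[OF V CA] unfolding WG_def .
    have "cov n A WG \<le> cov n A W" by (rule cov_mono) (simp add: W_def)
    hence c1: "real L * real n / real k \<le> real (cov n A W)" using c0 by linarith
    have Lt: "real k - real t \<le> real L" using tk by linarith
    have "real t / real k \<le> 2 * sqrt (real k) / real k" by (rule divide_right_mono[OF tup]) simp
    hence q2: "real t / real k \<le> 2 / sqrt (real k)" using skk by simp
    have "3/4 - 2 / sqrt (real k) \<le> 1 - real t / real k" using q2 by linarith
    also have "1 - real t / real k = (real k - real t) / real k" using kp by (simp add: diff_divide_distrib)
    also have "\<dots> \<le> real L / real k" using Lt kp by (simp add: divide_right_mono)
    finally have ge: "3/4 - 2 / sqrt (real k) \<le> real L / real k" .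
    have "(3/4 - 2 / sqrt (real k)) * \<Omega> \<le> (real L / real k) * \<Omega>" using ge \<Omega>p by (intro mult_right_mono) auto
    also have "\<dots> \<le> (real L / real k) * real n" using \<Omega>n by (intro mult_left_mono) auto
    also have "\<dots> = real L * real n / real k" by simp
    also have "\<dots> \<le> real (cov n A W)" using c1 .
    finally have "3/4 - 2 / sqrt (real k) \<le> real (cov n A W) / \<Omega>" using \<Omega>p by (simp add: le_divide_eq)
    thus ?thesis unfolding rep_ratio_def \<Omega>_def using False by simp
  qed
  define s0 where "s0 = Max (insert 0 (scr n A ` (C - W)))"
  define s where "s = real s0"
  have finCW: "finite (C - W)" using finC by simp
  have s_ge: "\<forall>c\<in>C - W. real (scr n A c) \<le> s" unfolding s_def s0_def using finCW by simp
  have s0nn: "0 \<le> s" unfolding s_def by simp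
  have s_cases: "s0 = 0 \<or> (\<exists>c\<in>C - W. s0 = scr n A c)"
  proof -
    have "s0 \<in> insert 0 (scr n A ` (C - W))" unfolding s0_def using finCW by (intro Max_in) auto
    thus ?thesis by auto
  qed
  have sF: "\<forall>w\<in>F. s \<le> real (scr n A w)"
  proof
    fix w assume wF: "w \<in> F"
    show "s \<le> real (scr n A w)"
    proof (cases "s0 = 0")
      case True thus ?thesis unfolding s_def by simp
    next
      case False
      then obtain c where c: "c \<in> C - W" "s0 = scr n A c" using s_cases by auto
      have "c \<in> X - F" using c(1) unfolding W_def X_def by auto
      hence "scr n A c \<le> scr n A w" using F(3) wF by blast
      thus ?thesis unfolding s_def using c(2) by simp
    qed
  qed
  have sWG: "\<forall>w\<in>WG. real n / real k \<le> real (scr n A w)" using scr_WG[OF V] unfolding WG_def by blast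
  define \<tau> where "\<tau> = 2 / sqrt (real k) - 1 / real k"
  have \<tau>k: "\<tau> * real k = 2 * sqrt (real k) - 1" unfolding \<tau>_def using sf(2) .
  have M: "\<tau> * real k * s \<le> (\<Sum>w\<in>W. min (real (scr n A w)) s)"
  proof (cases "s \<le> real n / real k")
    case True
    have "\<tau> * real k * s \<le> real k * s" unfolding \<tau>k using sf(5) s0nn by (rule mult_right_mono)
    also have "\<dots> = (\<Sum>w\<in>W. s)" using cW by simp
    also have "\<dots> = (\<Sum>w\<in>W. min (real (scr n A w)) s)"
    proof (rule sum.cong[OF refl])
      fix w assume "w \<in> W"
      hence "w \<in> WG \<or> w \<in> F" unfolding W_def by simp
      hence "s \<le> real (scr n A w)"
      proof
        assume "w \<in> WG" hence "real n / real k \<le> real (scr n A w)" using sWG by blast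
        thus ?thesis using True by linarith
      next
        assume "w \<in> F" thus ?thesis using sF by blast
      qed
      thus "s = min (real (scr n A w)) s" by simp
    qed
    finally show ?thesis .
  next
    case False
    hence sgt: "real n / real k < s" by simp
    have "s0 \<noteq> 0"
    proof
      assume "s0 = 0" hence "s = 0" unfolding s_def by simp
      moreover have "real n / real k > 0" using np kp by simp
      ultimately show False using sgt by linarith
    qed
    then obtain cst where cst: "cst \<in> C - W" "s0 = scr n A cst" using s_cases by auto
    have cstC: "cst \<in> C" and cstWG: "cst \<notin> cs ` {..<L}" using cst(1) unfolding W_def WG_def by auto
    have sscr: "s = real (scr n A cst)" unfolding s_def using cst(2) by simp
    define Ls where "Ls = {l. 1 \<le> l \<and> l \<le> k \<and> real l * real n / real k \<le> s}"
    have finLs: "finite Ls" unfolding Ls_def by (rule finite_subset[of _ "{..k}"]) auto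
    have oneLs: "1 \<in> Ls" unfolding Ls_def using k_pos sgt by simp
    define l where "l = Max Ls"
    have lLs: "l \<in> Ls" unfolding l_def using Max_in[OF finLs] oneLs by auto
    have l1: "1 \<le> l" and lk: "l \<le> k" and lo: "real l * real n / real k \<le> s" using lLs unfolding Ls_def by auto
    have hi: "s < real (l + 1) * real n / real k"
    proof (cases "l + 1 \<le> k")
      case True
      have "l + 1 \<notin> Ls" using Max_ge[OF finLs, of "l + 1"] unfolding l_def[symmetric] by auto
      thus ?thesis using True unfolding Ls_def by auto
    next
      case False
      hence lk': "l = k" using lk by simp
      have "s \<le> real n" unfolding sscr using scr_le_n by simp
      also have "real n < real (k + 1) * real n / real k" using np kp by (simp add: field_simps)
      finally show ?thesis using lk' by simp
    qed
    obtain H where H: "H \<subseteq> cs ` {..<L}" "\<forall>w\<in>H. scr n A cst \<le> scr n A w" "l \<le> card H"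
      "(L = k \<and> real l * real n / real k < real (scr n A cst)) \<longrightarrow> l + 1 \<le> card H"
      using bcount[OF V CA cstC cstWG l1 lk lo[unfolded sscr] hi[unfolded sscr]] by blast
    define B where "B = H \<union> F"
    have HWG: "H \<subseteq> WG" using H(1) unfolding WG_def .
    have finH: "finite H" by (rule finite_subset[OF HWG finWG])
    have dHF: "H \<inter> F = {}" using HWG dWF by auto
    have cB: "card B = card H + card F" unfolding B_def using card_Un_disjoint[OF finH finF dHF] .
    have BW: "B \<subseteq> W" unfolding B_def W_def using HWG by auto
    have finB: "finite B" by (rule finite_subset[OF BW finW])
    have sB: "\<forall>w\<in>B. s \<le> real (scr n A w)" using sF H(2) sscr unfolding B_def by auto
    have bsn: "s \<le> real (card B) * real n / real k"
    proof (cases "F = {}")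
      case False
      hence "card F \<ge> 1" using finF by (simp add: Suc_le_eq card_gt_0_iff)
      hence "l + 1 \<le> card B" using cB H(3) by simp
      hence "real (l + 1) * real n / real k \<le> real (card B) * real n / real k"
        by (intro divide_right_mono mult_right_mono) auto
      thus ?thesis using hi by simp
    next
      case True
      hence "card F = 0" by simp
      hence Lk2: "L = k" using F(2) Lk by simp
      show ?thesis
      proof (cases "real l * real n / real k < s")
        case True
        hence "l + 1 \<le> card H" using H(4) Lk2 sscr by simp
        hence "real (l + 1) * real n / real k \<le> real (card B) * real n / real k"
          using cB by (intro divide_right_mono mult_right_mono) auto
        thus ?thesis using hi by simp
      next
        case False
        hence "s = real l * real n / real k" using lo by simp
        also have "\<dots> \<le> real (card B) * real n / real k"
          using H(3) cB by (intro divide_right_mono mult_right_mono) auto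
        finally show ?thesis .
      qed
    qed
    have bk: "card B \<le> k" using card_mono[OF finW BW] cW by simp
    have "(\<Sum>w\<in>W. min (real (scr n A w)) s) = (\<Sum>w\<in>B. min (real (scr n A w)) s) + (\<Sum>w\<in>W - B. min (real (scr n A w)) s)"
      using sum.subset_diff[OF BW finW, of "\<lambda>w. min (real (scr n A w)) s"] by (simp add: add.commute)
    also have "(\<Sum>w\<in>B. min (real (scr n A w)) s) = (\<Sum>w\<in>B. s)" by (rule sum.cong) (use sB in auto)
    also have "\<dots> = real (card B) * s" by simp
    finally have Msplit: "(\<Sum>w\<in>W. min (real (scr n A w)) s) = real (card B) * s + (\<Sum>w\<in>W - B. min (real (scr n A w)) s)" .
    have rest: "(\<Sum>w\<in>W - B. real n / real k) \<le> (\<Sum>w\<in>W - B. min (real (scr n A w)) s)"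
    proof (rule sum_mono)
      fix w assume w: "w \<in> W - B"
      hence "w \<in> WG" unfolding W_def B_def by auto
      hence "real n / real k \<le> real (scr n A w)" using sWG by blast
      thus "real n / real k \<le> min (real (scr n A w)) s" using sgt by simp
    qed
    have cWB: "card (W - B) = k - card B" using card_Diff_subset[OF finB BW] cW by simp
    have "(\<Sum>w\<in>W - B. real n / real k) = (real k - real (card B)) * (real n / real k)"
      using cWB bk by (simp add: of_nat_diff)
    hence Mlo: "real (card B) * s + (real k - real (card B)) * (real n / real k) \<le> (\<Sum>w\<in>W. min (real (scr n A w)) s)"
      using Msplit rest by linarith
    have "(2 * sqrt (real k) - 1) * s \<le> real (card B) * s + (real k - real (card B)) * (real n / real k)"
      by (rule arith2[OF np kp bsn sgt])
    thus ?thesis using Mlo \<tau>k by (simp add: mult.commute)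
  qed
  have ut: "\<tau> * real (opt_sw C n A k) \<le> real (sw n A W)"
    by (rule util_from_M[OF WC s_ge s0nn _ _ M]) (use sf in \<open>auto simp: \<tau>_def\<close>)
  have util: "util_ratio C n A k W \<ge> \<tau>"
  proof (cases "opt_sw C n A k = 0")
    case True thus ?thesis unfolding util_ratio_def \<tau>_def using sf by simp
  next
    case False
    hence "real (opt_sw C n A k) > 0" by simp
    hence "\<tau> \<le> real (sw n A W) / real (opt_sw C n A k)" using ut by (simp add: le_divide_eq)
    thus ?thesis unfolding util_ratio_def using False by simp
  qed
  show ?thesis using comm ejr rep util unfolding \<tau>_def by blast
qed

end

theorem theorem7:
  fixes C :: "'c set" and n :: nat and A :: "nat \<Rightarrow> 'c set" and k :: nat
  assumes "is_instance C n A k"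
  shows "\<exists>W. committee C k W \<and> EJR_plus n A k W
           \<and> rep_ratio C n A k W \<ge> 3/4 - 2 / sqrt (real k)
           \<and> util_ratio C n A k W \<ge> 2 / sqrt (real k) - 1 / real k"
proof -
  interpret I: inst C n A k using assms by (rule inst.intro)
  obtain cs ls L where V: "valid C n A k cs ls L" and CA: "compl_above C n A k 0 cs ls L"
    using I.exists_hist by blast
  define x where "x = 2 * sqrt (real k)"
  have k1: "1 \<le> real k" using I.k_pos by simp
  have x2: "2 \<le> x" unfolding x_def using k1 by simp
  define t where "t = nat \<lfloor>x\<rfloor>"
  have fl0: "0 \<le> \<lfloor>x\<rfloor>" using x2 by simp
  have tr: "real t = real_of_int \<lfloor>x\<rfloor>" unfolding t_def using fl0 by simp
  have tup: "real t \<le> 2 * sqrt (real k)" unfolding tr x_def[symmetric] by (rule of_int_floor_le)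
  have tlo: "2 * sqrt (real k) - 1 \<le> real t" unfolding tr x_def[symmetric] using floor_correct[of x] by simp
  have t1: "1 \<le> t"
  proof -
    have "1 \<le> real t" using tlo x2 unfolding x_def by linarith
    thus ?thesis by simp
  qed
  show ?thesis
  proof (cases "L + t \<le> k")
    case True
    show ?thesis by (rule I.regime1[OF V CA True tup tlo t1])
  next
    case False
    hence kt: "k < L + t" by simp
    show ?thesis by (rule I.regime2[OF V CA kt tup])
  qed
qed


end
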